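(* Let $n,k,d$ be integers with $1\le k\le d<n$, let $\alpha>0$, and for each integer $M\ge 0$ put $n_M=n+M$, $k_M=k+M$, $d_M=d+M$. Let $s\in(0,1]$ be fixed and put $i=i_M=1+s(k_M-1)$. Then $$\lim_{M\to\infty}\frac{P^{1}_{n_M,k_M,d_M}\!\left(\alpha,\frac{(d_M-k_M+i)\alpha}{d_M-k_M+1}\right)}{C_{k_M,d_M}\!\left(\alpha,\frac{(d_M-k_M+i)\alpha}{d_M-k_M+1}\right)}=1.$$
   Context: For integers $1\le k\le d$ and $\alpha,\gamma>0$, $C_{k,d}(\alpha,\gamma)=\sum_{j=0}^{k-1}\min\{\alpha,\frac{d-j}{d}\gamma\}$ (the functional-repair capacity). For integers $1\le k\le d<n$ and $\alpha>0$, the function $P^{1}_{n,k,d}$ is defined at the points $\gamma=\frac{(d-k+x)\alpha}{d-k+1}$, $x\in[1,k]$, as follows: for integer $x=i\in\{1,\dots,k\}$, $P^{1}_{n,k,d}\left(\alpha,\frac{(d-k+i)\alpha}{d-k+1}\right)=\frac{n i\alpha}{n-k+i}$, and for non-integer $x\in[1,k]$ the value is obtained by linear interpolation (in $\gamma$) between the values at the two neighbouring integers, i.e. $x\mapsto P^1_{n,k,d}\left(\alpha,\frac{(d-k+x)\alpha}{d-k+1}\right)$ is the piecewise linear curve connecting these points. *)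

theory Defs
  imports Complex_Main
begin

definition Cap :: "nat \<Rightarrow> nat \<Rightarrow> real \<Rightarrow> real \<Rightarrow> real" where
  "Cap k d \<alpha> \<gamma> = (\<Sum>j<k. min \<alpha> ((real d - real j) / real d * \<gamma>))"

definition P1_node :: "nat \<Rightarrow> nat \<Rightarrow> real \<Rightarrow> real \<Rightarrow> real" where
  "P1_node n k \<alpha> x = real n * x * \<alpha> / (real n - real k + x)"

text \<open>P^1_{n,k,d}(alpha,gamma), defined for gamma = (d-k+x) alpha/(d-k+1) with x in [1,k]:
  recover x from gamma, and interpolate linearly between the neighbouring integers
  (gamma is affine in x, so linear interpolation in gamma equals linear interpolation in x).\<close>
definition P1 :: "nat \<Rightarrow> nat \<Rightarrow> nat \<Rightarrow> real \<Rightarrow> real \<Rightarrow> real" where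
  "P1 n k d \<alpha> \<gamma> =
    (let x = \<gamma> * (real d - real k + 1) / \<alpha> - (real d - real k) in
     if 1 \<le> x \<and> x \<le> real k then
       (if x = real k then P1_node n k \<alpha> (real k)
        else let i = of_int \<lfloor>x\<rfloor> in
          P1_node n k \<alpha> i + (x - i) * (P1_node n k \<alpha> (i + 1) - P1_node n k \<alpha> i))
     else undefined)"

end

theory Submission imports Defs "HOL-Real_Asymp.Real_Asymp" begin

lemma node_mono:
  assumes "K < N" "\<alpha> > 0" "0 \<le> a" "a \<le> b"
  shows "P1_node N K \<alpha> a \<le> P1_node N K \<alpha> b"
proof -
  have c: "real N - real K > 0" using assms by simp
  have "a * (real N - real K) \<le> b * (real N - real K)"
    using assms c by (intro mult_right_mono) auto
  hence "a * (real N - real K + b) \<le> b * (real N - real K + a)"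
    by (simp add: algebra_simps)
  hence "a / (real N - real K + a) \<le> b / (real N - real K + b)"
    using c assms by (simp add: divide_simps)
  hence "real N * \<alpha> * (a / (real N - real K + a)) \<le> real N * \<alpha> * (b / (real N - real K + b))"
    using assms by (intro mult_left_mono) auto
  thus ?thesis unfolding P1_node_def by (simp add: field_simps)
qed

lemma node_le:
  assumes "K < N" "\<alpha> > 0" "0 \<le> a"
  shows "P1_node N K \<alpha> a \<le> real N * \<alpha>"
proof -
  have c: "real N - real K > 0" using assms by simp
  have "a / (real N - real K + a) \<le> 1" using c assms by simp
  hence "real N * \<alpha> * (a / (real N - real K + a)) \<le> real N * \<alpha> * 1"
    using assms by (intro mult_left_mono) auto
  thus ?thesis unfolding P1_node_def by (simp add: field_simps)
qed

lemma P1_bounds: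
  fixes N K dd :: nat and \<alpha> x \<gamma> :: real
  assumes "K < N" "K \<le> dd" "\<alpha>>0" "1 \<le> x" "x \<le> real K"
    "\<gamma> = (real dd - real K + x)*\<alpha>/(real dd - real K + 1)"
  shows "P1_node N K \<alpha> (x-1) \<le> P1 N K dd \<alpha> \<gamma> \<and> P1 N K dd \<alpha> \<gamma> \<le> real N * \<alpha>"
proof -
  have pos: "real dd - real K + 1 > 0" using assms by simp
  have xe: "\<gamma> * (real dd - real K + 1)/\<alpha> - (real dd - real K) = x"
    using assms pos by (simp add: field_simps)
  show ?thesis
  proof (cases "x = real K")
    case True
    hence "P1 N K dd \<alpha> \<gamma> = P1_node N K \<alpha> (real K)"
      unfolding P1_def Let_def xe using assms by simp
    thus ?thesis using node_mono[of K N \<alpha> "x-1" "real K"] node_le[of K N \<alpha> "real K"] assms by auto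
  next
    case False
    define i where "i = real_of_int \<lfloor>x\<rfloor>"
    have i1: "i \<le> x" "x < i + 1" unfolding i_def by linarith+
    have "1 \<le> \<lfloor>x\<rfloor>" using assms(4) by (simp add: le_floor_iff)
    hence i0: "1 \<le> i" unfolding i_def by simp
    have eq: "P1 N K dd \<alpha> \<gamma> = P1_node N K \<alpha> i + (x - i) * (P1_node N K \<alpha> (i + 1) - P1_node N K \<alpha> i)"
      unfolding P1_def Let_def xe i_def using assms False by simp
    have m: "P1_node N K \<alpha> i \<le> P1_node N K \<alpha> (i+1)" using node_mono assms i0 by simp
    have lo: "P1_node N K \<alpha> i \<le> P1 N K dd \<alpha> \<gamma>" unfolding eq using m i1 by simp
    have "(x - i) * (P1_node N K \<alpha> (i + 1) - P1_node N K \<alpha> i) \<le> 1 * (P1_node N K \<alpha> (i + 1) - P1_node N K \<alpha> i)"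
      using m i1 by (intro mult_right_mono) auto
    hence hi: "P1 N K dd \<alpha> \<gamma> \<le> P1_node N K \<alpha> (i+1)" unfolding eq by simp
    have "P1_node N K \<alpha> (x-1) \<le> P1_node N K \<alpha> i" using node_mono assms i1 by simp
    moreover have "P1_node N K \<alpha> (i+1) \<le> real N * \<alpha>" using node_le assms i0 by simp
    ultimately show ?thesis using lo hi by linarith
  qed
qed

lemma Cap_upper:
  assumes "\<alpha> > 0"
  shows "Cap K dd \<alpha> \<gamma> \<le> real K * \<alpha>"
proof -
  have "Cap K dd \<alpha> \<gamma> \<le> (\<Sum>j<K. \<alpha>)" unfolding Cap_def by (intro sum_mono) simp
  thus ?thesis by simp
qed

lemma Cap_lower:
  assumes "\<alpha> > 0" "\<gamma> > 0" "K \<le> dd" "L \<le> K"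
    "\<And>j. j < K - L \<Longrightarrow> (real dd - real j) / real dd * \<gamma> \<ge> \<alpha>"
  shows "Cap K dd \<alpha> \<gamma> \<ge> real (K - L) * \<alpha>"
proof -
  have "real (K - L) * \<alpha> = (\<Sum>j<K-L. \<alpha>)" by simp
  also have "\<dots> = (\<Sum>j<K-L. min \<alpha> ((real dd - real j) / real dd * \<gamma>))"
    using assms(5) by (intro sum.cong) auto
  also have "\<dots> \<le> Cap K dd \<alpha> \<gamma>" unfolding Cap_def
    apply (rule sum_mono2)
      apply simp
     apply auto[1]
    using assms by (auto intro!: mult_nonneg_nonneg divide_nonneg_nonneg)
  finally show ?thesis .
qed

lemma lim1:
  assumes "k < n" "0 < s" "\<alpha> > 0"
  shows "(\<lambda>M. P1_node (n+M) (k+M) \<alpha> (s*(real (k+M) - 1)) / (real (k+M) * \<alpha>)) \<longlonglongrightarrow> 1"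
  unfolding P1_node_def using assms by (real_asymp simp: field_simps)

lemma lim2:
  assumes "\<alpha> > 0"
  shows "(\<lambda>M. real (n+M) * \<alpha> / ((real (k+M) - real L) * \<alpha>)) \<longlonglongrightarrow> 1"
  using assms by (real_asymp simp: field_simps)

theorem theorem5p1:
  fixes n k d :: nat and \<alpha> s :: real
  assumes "1 \<le> k" and "k \<le> d" and "d < n" and "\<alpha> > 0" and "0 < s" and "s \<le> 1"
  shows "(\<lambda>M. let i = 1 + s * (real (k + M) - 1);
                  \<gamma> = (real (d + M) - real (k + M) + i) * \<alpha> / (real (d + M) - real (k + M) + 1)
              in P1 (n + M) (k + M) (d + M) \<alpha> \<gamma> / Cap (k + M) (d + M) \<alpha> \<gamma>)
         \<longlonglongrightarrow> 1"
proof -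
  define D where "D = real d - real k"
  have D0: "D \<ge> 0" unfolding D_def using assms by simp
  define L where "L = nat \<lceil>(D+1)/s\<rceil>"
  have Ls: "L * s \<ge> D + 1"
  proof -
    have "real L \<ge> (D+1)/s" unfolding L_def by linarith
    thus ?thesis using assms(5) by (simp add: field_simps)
  qed
  define r where "r = (\<lambda>M. let i = 1 + s * (real (k + M) - 1);
                  \<gamma> = (real (d + M) - real (k + M) + i) * \<alpha> / (real (d + M) - real (k + M) + 1)
              in P1 (n + M) (k + M) (d + M) \<alpha> \<gamma> / Cap (k + M) (d + M) \<alpha> \<gamma>)"
  have bnd: "P1_node (n+M) (k+M) \<alpha> (s*(real (k+M) - 1)) / (real (k+M) * \<alpha>) \<le> r M
     \<and> r M \<le> real (n+M) * \<alpha> / ((real (k+M) - real L) * \<alpha>)" if hM: "M \<ge> L + 1" for M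
  proof -
    define K where "K = k + M"
    define dd where "dd = d + M"
    define N where "N = n + M"
    define x where "x = 1 + s * (real K - 1)"
    define \<gamma> where "\<gamma> = (real dd - real K + x) * \<alpha> / (real dd - real K + 1)"
    have Dd: "real dd - real K = D" unfolding D_def dd_def K_def by simp
    have rM: "r M = P1 N K dd \<alpha> \<gamma> / Cap K dd \<alpha> \<gamma>"
      unfolding r_def Let_def K_def dd_def N_def \<gamma>_def x_def by simp
    have K1: "real K \<ge> 1" unfolding K_def using assms by simp
    have x1: "1 \<le> x" unfolding x_def using assms K1 by simp
    have "s * (real K - 1) \<le> 1 * (real K - 1)" using assms K1 by (intro mult_right_mono) auto
    hence xK: "x \<le> real K" unfolding x_def by simp
    have xsK: "x \<ge> s * real K" unfolding x_def using assms by (simp add: algebra_simps)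
    have KN: "K < N" "K \<le> dd" unfolding K_def N_def dd_def using assms by auto
    have gpos: "\<gamma> > 0" unfolding \<gamma>_def Dd using D0 x1 assms by simp
    have PB: "P1_node N K \<alpha> (x-1) \<le> P1 N K dd \<alpha> \<gamma> \<and> P1 N K dd \<alpha> \<gamma> \<le> real N * \<alpha>"
      by (rule P1_bounds[OF KN assms(4) x1 xK \<gamma>_def])
    have LK: "L < K" unfolding K_def using hM by simp
    have capU: "Cap K dd \<alpha> \<gamma> \<le> real K * \<alpha>" by (rule Cap_upper[OF assms(4)])
    have capL: "Cap K dd \<alpha> \<gamma> \<ge> real (K - L) * \<alpha>"
    proof (rule Cap_lower[OF assms(4) gpos KN(2)])
      show "L \<le> K" using LK by simp
      fix j assume j: "j < K - L"
      have ddpos: "real dd > 0" using KN K1 by simp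
      have jb: "real dd - real j \<ge> D + L" using j Dd by linarith
      have "(real dd - real j) * (D + x) \<ge> (D + L) * (D + s * real K)"
        using jb xsK D0 assms(5) by (intro mult_mono) auto
      moreover have "(D + L) * (D + s * real K) \<ge> L * (D + s * real K)"
        using D0 assms by (intro mult_right_mono) auto
      moreover have "L * (D + s * real K) \<ge> L * (s * D + s * real K)"
        using D0 assms by (intro mult_left_mono) (auto simp: mult_left_le_one_le)
      moreover have "L * (s * D + s * real K) = (L * s) * real dd" using Dd by (simp add: algebra_simps)
      moreover have "(L * s) * real dd \<ge> (D + 1) * real dd" using Ls ddpos by (intro mult_right_mono) auto
      ultimately have key: "(real dd - real j) * (D + x) \<ge> (D + 1) * real dd" by linarith
      define q where "q = ((real dd - real j) * (D + x)) / ((D + 1) * real dd)"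
      have e: "(real dd - real j) / real dd * \<gamma> = \<alpha> * q"
        unfolding \<gamma>_def Dd q_def using ddpos D0 by (simp add: field_simps)
      have "q \<ge> 1" unfolding q_def using key ddpos D0 by simp
      hence "\<alpha> * 1 \<le> \<alpha> * q" using assms(4) by (intro mult_left_mono) auto
      thus "\<alpha> \<le> (real dd - real j) / real dd * \<gamma>" using e by simp
    qed
    have KLpos: "real (K - L) * \<alpha> > 0" using LK assms by simp
    have capP: "Cap K dd \<alpha> \<gamma> > 0" using KLpos capL by linarith
    have node0: "P1_node N K \<alpha> (x-1) \<ge> 0" unfolding P1_node_def using x1 KN assms
      by (intro divide_nonneg_pos mult_nonneg_nonneg) auto
    have P0: "P1 N K dd \<alpha> \<gamma> \<ge> 0" using PB node0 by linarith
    have lo: "P1_node N K \<alpha> (x-1) / (real K * \<alpha>) \<le> r M"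
      unfolding rM using PB node0 capP capU by (intro frac_le) auto
    have hi: "r M \<le> real N * \<alpha> / (real (K - L) * \<alpha>)"
      unfolding rM using PB P0 KLpos capL by (intro frac_le) (auto simp del: of_nat_diff)
    have "x - 1 = s*(real (k+M) - 1)" unfolding x_def K_def by simp
    moreover have "real (K - L) = real (k+M) - real L" using LK unfolding K_def by simp
    ultimately show ?thesis using lo hi unfolding K_def N_def by simp
  qed
  have "r \<longlonglongrightarrow> 1"
  proof (rule tendsto_sandwich[OF _ _ lim1[of k n s \<alpha>] lim2[of \<alpha> n k L]])
    show "\<forall>\<^sub>F M in sequentially. P1_node (n+M) (k+M) \<alpha> (s*(real (k+M) - 1)) / (real (k+M) * \<alpha>) \<le> r M"
      using bnd by (intro eventually_sequentiallyI[of "L+1"]) blast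
    show "\<forall>\<^sub>F M in sequentially. r M \<le> real (n+M) * \<alpha> / ((real (k+M) - real L) * \<alpha>)"
      using bnd by (intro eventually_sequentiallyI[of "L+1"]) blast
  qed (use assms in auto)
  thus ?thesis unfolding r_def .
qed

end
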